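(* Let $2/5 < r < 1$, put $p = \left\lceil \frac{5r-2}{1-r} \right\rceil$ and $\alpha = p - \frac{5r-2}{1-r}$ (so $p \ge 1$ and $0 \le \alpha < 1$), and let $\alpha = (0.\alpha_1 \alpha_2 \cdots)_2$ be the binary expansion of $\alpha$ with infinitely many zero digits. Define binary words $w^{\langle 0 \rangle} = \emptyset$ (the empty word) and $w^{\langle i \rangle} = w^{\langle i-1 \rangle} w^{\langle i-1 \rangle}\, 01011\, 0^{p - \alpha_i}$ for $i \geq 1$. Let $\ell_i$ be the length of $w^{\langle i \rangle}$, $\zeta_i = |Z(w^{\langle i \rangle})|$ and $\pi_i = |P(w^{\langle i \rangle})|$. Then for every $i \geq 1$, $$\ell_i = (2^i - 1)(p+5) - \sum_{j=1}^{i} 2^{i-j}\alpha_j,\qquad \zeta_i = (2^i - 1)(p+2) - \sum_{j=1}^{i} 2^{i-j}\alpha_j,$$ $$\pi_i = (2^i - 1)p - 1 - \sum_{j=1}^{i} 2^{i-j}\alpha_j + \delta_{p,1}\alpha_i,$$ where $\delta_{p,1}$ is the Kronecker delta.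
   Context: For a binary word $x$, $x^j$ denotes $j$ concatenated copies of $x$ ($x^0$ is empty), and juxtaposition denotes concatenation. For a binary word $w = w_1 \cdots w_\ell$ of length $\ell$, $Z(w)$ is the set of indices $i$ with $w_i = 0$, and $P(w)$ is the set of indices $i \geq 2$ such that at least one of the following holds: (i) $\ell \geq i$ and $w_{i-1} w_i = 00$; (ii) $\ell \geq i+2$ and $w_{i-1} w_i w_{i+1} w_{i+2} = 0100$; (iii) $\ell \geq i+3$ and $w_{i-1} \cdots w_{i+3} = 01010$. *)

theory Defs
  imports Complex_Main
begin

text \<open>Binary words are lists over nat with entries 0/1; positions are 1-indexed as in the paper.\<close>

definition letter :: "nat list \<Rightarrow> nat \<Rightarrow> nat" where
  "letter w i = w ! (i - 1)"

definition Zset :: "nat list \<Rightarrow> nat set" where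
  "Zset w = {i. 1 \<le> i \<and> i \<le> length w \<and> letter w i = 0}"

definition Pset :: "nat list \<Rightarrow> nat set" where
  "Pset w = {i. 2 \<le> i \<and>
     ((length w \<ge> i \<and> letter w (i-1) = 0 \<and> letter w i = 0)
    \<or> (length w \<ge> i + 2 \<and> letter w (i-1) = 0 \<and> letter w i = 1 \<and>
         letter w (i+1) = 0 \<and> letter w (i+2) = 0)
    \<or> (length w \<ge> i + 3 \<and> letter w (i-1) = 0 \<and> letter w i = 1 \<and>
         letter w (i+1) = 0 \<and> letter w (i+2) = 1 \<and> letter w (i+3) = 0))}"

text \<open>The words w<i> built from p and digits d (d j = alpha_j for j >= 1).\<close>
fun wrd :: "nat \<Rightarrow> (nat \<Rightarrow> nat) \<Rightarrow> nat \<Rightarrow> nat list" where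
  "wrd p d 0 = []"
| "wrd p d (Suc i) = wrd p d i @ wrd p d i @ [0,1,0,1,1] @ replicate (p - d (Suc i)) 0"

end

theory Submission imports Defs begin

fun hm :: "nat list \<Rightarrow> bool" where
  "hm (0#0#_) = True"
| "hm (0#Suc 0#0#0#_) = True"
| "hm (0#Suc 0#0#Suc 0#0#_) = True"
| "hm _ = False"

lemma hm_idx: "hm w \<longleftrightarrow> (length w \<ge> 2 \<and> w!0 = 0 \<and> w!1 = 0)
   \<or> (length w \<ge> 4 \<and> w!0 = 0 \<and> w!1 = 1 \<and> w!2 = 0 \<and> w!3 = 0)
   \<or> (length w \<ge> 5 \<and> w!0 = 0 \<and> w!1 = 1 \<and> w!2 = 0 \<and> w!3 = 1 \<and> w!4 = 0)"
  by (induction w rule: hm.induct) (auto simp: numeral_eq_Suc)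

lemma hm_take: "hm w = hm (take 5 w)"
  by (induction w rule: hm.induct) (auto simp: numeral_eq_Suc)

lemma Pset_hm: "i \<in> Pset w \<longleftrightarrow> 2 \<le> i \<and> hm (drop (i-2) w)"
proof (cases "2 \<le> i")
  case True
  then obtain j where j: "i = j + 2" by (metis le_add_diff_inverse2)
  show ?thesis
  proof (cases "j \<le> length w")
    case True
    then show ?thesis unfolding Pset_def hm_idx letter_def j
      by (simp add: nth_drop numeral_eq_Suc add.commute[of j]; linarith?; auto)
  next
    case False
    then show ?thesis unfolding Pset_def hm_idx letter_def j by auto
  qed
qed (auto simp: Pset_def)
fun cnt :: "nat list \<Rightarrow> nat" where
  "cnt [] = 0"
| "cnt (x#xs) = (if hm (x#xs) then 1 else 0) + cnt xs"

lemma card_drop: "card {j. j < length w \<and> hm (drop j w)} = cnt w"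
proof (induction w)
  case Nil then show ?case by simp
next
  case (Cons x xs)
  have e: "{j. j < length (x#xs) \<and> hm (drop j (x#xs))} =
     (if hm (x#xs) then {0} else {}) \<union> Suc ` {j. j < length xs \<and> hm (drop j xs)}"
    by (auto simp: image_iff less_Suc_eq_0_disj)
  have "card ((if hm (x#xs) then {0} else {}) \<union> Suc ` {j. j < length xs \<and> hm (drop j xs)})
     = (if hm (x#xs) then 1 else 0) + card (Suc ` {j. j < length xs \<and> hm (drop j xs)})"
    by (auto simp: card_image)
  also have "card (Suc ` {j. j < length xs \<and> hm (drop j xs)}) = cnt xs"
    using Cons by (simp add: card_image)
  finally show ?case using e by simp
qed

lemma card_P: "card (Pset w) = cnt w"
proof -
  have "Pset w = (\<lambda>j. j+2) ` {j. j < length w \<and> hm (drop j w)}"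
  proof (rule set_eqI)
    fix i
    show "i \<in> Pset w \<longleftrightarrow> i \<in> (\<lambda>j. j+2) ` {j. j < length w \<and> hm (drop j w)}"
    proof -
      have hl: "hm (drop j w) \<Longrightarrow> j < length w" for j by (cases "j < length w") auto
      show ?thesis unfolding Pset_hm image_iff
      proof
        assume a: "2 \<le> i \<and> hm (drop (i-2) w)"
        then have "i - 2 \<in> {j. j < length w \<and> hm (drop j w)}" using hl by blast
        moreover have "i = (i-2) + 2" using a by linarith
        ultimately show "\<exists>x\<in>{j. j < length w \<and> hm (drop j w)}. i = x + 2" by blast
      qed auto
    qed
  qed
  moreover have "inj (\<lambda>j::nat. j+2)" by (simp add: inj_def)
  ultimately show ?thesis using card_drop by (simp add: card_image inj_on_def)
qed

lemma card_Z: "card (Zset w) = length (filter (\<lambda>x. x = 0) w)"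
proof -
  have "Zset w = Suc ` {j. j < length w \<and> w!j = 0}"
  proof (rule set_eqI)
    fix x show "x \<in> Zset w \<longleftrightarrow> x \<in> Suc ` {j. j < length w \<and> w!j = 0}"
      unfolding Zset_def letter_def by (cases x) (auto simp: image_iff)
  qed
  then show ?thesis by (simp add: card_image length_filter_conv_card)
qed
lemma hm_app: "take 4 Y = take 4 Y' \<Longrightarrow> hm (x # Z @ Y) = hm (x # Z @ Y')"
proof -
  assume a: "take 4 Y = take 4 Y'"
  have "take (4 - length Z) Y = take (4 - length Z) Y'"
    by (metis a min.absorb1 diff_le_self take_take)
  then have "take 5 (x # Z @ Y) = take 5 (x # Z @ Y')"
    by (simp add: numeral_eq_Suc)
  then show ?thesis by (metis hm_take)
qed

lemma cnt_app: "take 4 Y = take 4 Y' \<Longrightarrow> cnt (X@Y) + cnt Y' = cnt (X@Y') + cnt Y"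
proof (induction X)
  case Nil then show ?case by simp
next
  case (Cons x X)
  then show ?case using hm_app[OF Cons.prems, of x X] by simp
qed

lemma cnt_rep: "cnt (replicate k 0) = k - 1"
proof (induction k)
  case (Suc k) then show ?case by (cases k) auto
qed simp

lemma cnt_rep_app: "cnt (replicate k 0 @ (0#v)) = k + cnt (0#v)"
proof (induction k)
  case (Suc k) then show ?case by (cases k) auto
qed simp

lemma cnt_split: "cnt (X @ [0,1,0,1,1] @ R) = cnt (X @ [0,1,0,1,1]) + cnt R"
  using cnt_app[of "[0,1,0,1,1] @ R" "[0,1,0,1,1]" X] by (simp add: numeral_eq_Suc)

lemma cnt_step: "cnt ((X @ [0,1,0,1,1] @ replicate k 0) @ ([0,1,0,1,1] @ R)) + (k - 1)
   = cnt (X @ [0,1,0,1,1] @ replicate k 0) + k + cnt R"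
proof -
  have "cnt ((X @ [0,1,0,1,1] @ replicate k 0) @ ([0,1,0,1,1] @ R)) =
     cnt (X @ [0,1,0,1,1]) + cnt (replicate k 0 @ ([0,1,0,1,1] @ R))"
    using cnt_split[of X "replicate k 0 @ ([0,1,0,1,1] @ R)"] by simp
  also have "cnt (replicate k 0 @ ([0,1,0,1,1] @ R)) = k + cnt R"
    using cnt_rep_app[of k "[1,0,1,1] @ R"] by simp
  finally show ?thesis using cnt_split[of X "replicate k 0"] cnt_rep[of k] by simp
qed

lemma wrd_start: "\<exists>R. wrd p d (Suc i) = [0,1,0,1,1] @ R"
proof (induction i)
  case (Suc i)
  then obtain R where R: "wrd p d (Suc i) = [0,1,0,1,1] @ R" by blast
  have "wrd p d (Suc (Suc i)) = [0,1,0,1,1] @ (R @ wrd p d (Suc i) @ [0,1,0,1,1] @ replicate (p - d (Suc (Suc i))) 0)"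
    by (subst wrd.simps, subst R) simp
  then show ?case by blast
qed simp
lemma cnt_one: "cnt (wrd p d (Suc 0)) = p - d 1 - 1"
  using cnt_rep[of "p - d 1"] by simp

lemma cnt_rec: "int (cnt (wrd p d (Suc (Suc n)))) = 2 * int (cnt (wrd p d (Suc n)))
   + 2 * (if 1 \<le> p - d (Suc n) then 1 else 0) + int (p - d (Suc (Suc n)) - 1)"
proof -
  define W where "W = wrd p d (Suc n)"
  define X where "X = wrd p d n @ wrd p d n"
  define k' where "k' = p - d (Suc n)"
  define k where "k = p - d (Suc (Suc n))"
  have WX: "W = X @ [0,1,0,1,1] @ replicate k' 0" unfolding W_def X_def k'_def by simp
  obtain R where R: "W = [0,1,0,1,1] @ R" using wrd_start unfolding W_def by blast
  have e: "wrd p d (Suc (Suc n)) = W @ ([0,1,0,1,1] @ (R @ [0,1,0,1,1] @ replicate k 0))"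
    unfolding W_def k_def by (subst wrd.simps, fold W_def, subst (2) R) simp
  have h1: "cnt (W @ ([0,1,0,1,1] @ (R @ [0,1,0,1,1] @ replicate k 0))) + (k' - 1)
     = cnt W + k' + cnt (R @ [0,1,0,1,1] @ replicate k 0)"
    unfolding WX by (rule cnt_step)
  have h2: "cnt (R @ [0,1,0,1,1] @ replicate k 0) = cnt (W @ ([0,1,0,1,1] @ replicate k 0))"
    unfolding R by simp
  have h3: "cnt (W @ ([0,1,0,1,1] @ replicate k 0)) + (k' - 1) = cnt W + k' + cnt (replicate k 0)"
    using cnt_step[of X k' "replicate k 0"] unfolding WX by simp
  show ?thesis using h1 h2 h3 cnt_rep[of k] unfolding e
    by (fold W_def k_def k'_def) (cases k', auto)
qed

lemma S_rec: "(\<Sum>j=1..Suc n. 2^(Suc n - j) * int (d j)) = 2 * (\<Sum>j=1..n. 2^(n - j) * int (d j)) + int (d (Suc n))"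
proof -
  have "(\<Sum>j=1..Suc n. 2^(Suc n - j) * int (d j)) = (\<Sum>j=1..n. 2^(Suc n - j) * int (d j)) + int (d (Suc n))"
    by (simp add: sum.cl_ivl_Suc)
  also have "(\<Sum>j=1..n. 2^(Suc n - j) * int (d j)) = (\<Sum>j=1..n. 2 * (2^(n - j) * int (d j)))"
    by (rule sum.cong) (auto simp: Suc_diff_le)
  finally show ?thesis by (simp add: sum_distrib_left)
qed
lemma main_ind:
  assumes p1: "1 \<le> p" and dle: "\<forall>j\<ge>1. d j \<le> (1::nat)"
  shows "int (length (wrd p d (Suc n))) =
           (2^Suc n - 1) * (int p + 5) - (\<Sum>j=1..Suc n. 2^(Suc n-j) * int (d j)) \<and>
         int (length (filter (\<lambda>x. x = 0) (wrd p d (Suc n)))) =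
           (2^Suc n - 1) * (int p + 2) - (\<Sum>j=1..Suc n. 2^(Suc n-j) * int (d j)) \<and>
         int (cnt (wrd p d (Suc n))) =
           (2^Suc n - 1) * int p - 1 - (\<Sum>j=1..Suc n. 2^(Suc n-j) * int (d j))
             + (if p = 1 then int (d (Suc n)) else 0)"
proof (induction n)
  case 0
  have "d 1 \<le> 1" using dle by simp
  then show ?case using p1 cnt_one[of p d] by (cases "d 1"; cases "p = 1") auto
next
  case (Suc n)
  define S where "S = (\<Sum>j=1..Suc n. 2^(Suc n-j) * int (d j))"
  define A :: int where "A = 2 ^ Suc n"
  have SS: "(\<Sum>j=1..Suc (Suc n). 2^(Suc (Suc n)-j) * int (d j)) = 2 * S + int (d (Suc (Suc n)))"
    unfolding S_def by (rule S_rec)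
  have AA: "(2::int) ^ Suc (Suc n) = 2 * A" unfolding A_def by simp
  have d1: "d (Suc n) \<le> 1" "d (Suc (Suc n)) \<le> 1" using dle by auto
  have L: "length (wrd p d (Suc (Suc n))) = 2 * length (wrd p d (Suc n)) + 5 + (p - d (Suc (Suc n)))"
    by simp
  have Z: "length (filter (\<lambda>x. x = 0) (wrd p d (Suc (Suc n)))) =
       2 * length (filter (\<lambda>x. x = 0) (wrd p d (Suc n))) + 2 + (p - d (Suc (Suc n)))"
    by simp
  note C = cnt_rec[of p d n]
  have IH: "int (length (wrd p d (Suc n))) = (A - 1) * (int p + 5) - S"
       "int (length (filter (\<lambda>x. x = 0) (wrd p d (Suc n)))) = (A - 1) * (int p + 2) - S"
       "int (cnt (wrd p d (Suc n))) = (A - 1) * int p - 1 - S + (if p = 1 then int (d (Suc n)) else 0)"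
    using Suc.IH unfolding S_def A_def by auto
  have E1: "int (p - d (Suc (Suc n))) = int p - int (d (Suc (Suc n)))" using d1 p1 by simp
  have L': "int (length (wrd p d (Suc (Suc n)))) = 2 * int (length (wrd p d (Suc n))) + 5 + int p - int (d (Suc (Suc n)))"
    using L E1 by simp
  have Z': "int (length (filter (\<lambda>x. x = 0) (wrd p d (Suc (Suc n))))) =
       2 * int (length (filter (\<lambda>x. x = 0) (wrd p d (Suc n)))) + 2 + int p - int (d (Suc (Suc n)))"
    using Z E1 by simp
  have C': "int (cnt (wrd p d (Suc (Suc n)))) = 2 * int (cnt (wrd p d (Suc n)))
     + (if p = 1 then 2 - 2 * int (d (Suc n)) else 2 + int p - int (d (Suc (Suc n))) - 1)"
  proof (cases "p = 1")
    case True
    then show ?thesis using C d1 by (cases "d (Suc n)") auto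
  next
    case False
    then have "p \<ge> 2" using p1 by simp
    then show ?thesis using C d1 by (simp add: of_nat_diff)
  qed
  have g1: "int (length (wrd p d (Suc (Suc n)))) = (2 * A - 1) * (int p + 5) - (2 * S + int (d (Suc (Suc n))))"
    unfolding L' IH(1) by (simp add: algebra_simps)
  have g2: "int (length (filter (\<lambda>x. x = 0) (wrd p d (Suc (Suc n))))) = (2 * A - 1) * (int p + 2) - (2 * S + int (d (Suc (Suc n))))"
    unfolding Z' IH(2) by (simp add: algebra_simps)
  have g3: "int (cnt (wrd p d (Suc (Suc n)))) = (2 * A - 1) * int p - 1 - (2 * S + int (d (Suc (Suc n))))
             + (if p = 1 then int (d (Suc (Suc n))) else 0)"
    unfolding C' IH(3) by (cases "p = 1") (simp_all add: algebra_simps)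
  show ?case unfolding SS AA using g1 g2 g3 by blast
qed
theorem lemma4p12:
  fixes r :: real and p :: nat and \<alpha> :: real and d :: "nat \<Rightarrow> nat" and i :: nat
  assumes hr: "2/5 < r" "r < 1"
    and hp: "int p = \<lceil>(5*r - 2) / (1 - r)\<rceil>"
    and ha: "\<alpha> = real p - (5*r - 2) / (1 - r)"
    and hd01: "\<forall>j\<ge>1. d j \<in> {0, 1}"
    and hdsum: "(\<lambda>j. real (d (Suc j)) / 2 ^ (Suc j)) sums \<alpha>"
    and hdinf: "infinite {j. 1 \<le> j \<and> d j = 0}"
    and hi: "1 \<le> i"
  shows "int (length (wrd p d i)) =
           (2^i - 1) * (int p + 5) - (\<Sum>j=1..i. 2^(i-j) * int (d j)) \<and>
         int (card (Zset (wrd p d i))) =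
           (2^i - 1) * (int p + 2) - (\<Sum>j=1..i. 2^(i-j) * int (d j)) \<and>
         int (card (Pset (wrd p d i))) =
           (2^i - 1) * int p - 1 - (\<Sum>j=1..i. 2^(i-j) * int (d j))
             + (if p = 1 then int (d i) else 0)"
proof -
  have pos: "0 < (5*r - 2) / (1 - r)" using hr by (intro divide_pos_pos) auto
  have "0 < \<lceil>(5*r - 2) / (1 - r)\<rceil>" using pos by simp
  then have p1: "1 \<le> p" using hp by linarith
  have dle: "\<forall>j\<ge>1. d j \<le> (1::nat)" using hd01 by auto
  obtain n where n: "i = Suc n" using hi by (cases i) auto
  show ?thesis using main_ind[OF p1 dle, of n] unfolding n card_P card_Z by simp
qed
end
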